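(* Let $G$ be a group, $H\subset G$ a subgroup and $A$ an $H$-ring. Then there is a ring isomorphism $\alpha:\operatorname{ind}_H^G(A)\rtimes G\xrightarrow{\cong}M_{G/H}(A\rtimes H)$, natural in $A$, such that $\alpha\circ(\xi_H(1,-)\rtimes\mathrm{id})$ equals the map $A\rtimes H\to M_{G/H}(A\rtimes H)$, $x\mapsto e_{H,H}\otimes x$, and such that $\alpha$ is compatible with the natural representations of both rings as endomorphisms of the right $A\rtimes H$-module $A^{(G)}$ (identified with $(A\rtimes H)^{(G/H)}$). Explicitly, choosing a set of representatives $\mathcal R$ of $G/H$ with $1\in\mathcal R$, writing $\hat s\in\mathcal R$ for the representative of $sH$ and $\phi(s)=\hat s^{-1}s\in H$, one may take $\alpha(\xi_H(s,a)\rtimes g)=e_{sH,g^{-1}sH}\otimes\phi(s)(a)\rtimes\phi(s)\phi(g^{-1}s)^{-1}$.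
   Context: Rings are not necessarily unital. For an $H$-ring $A$, $\operatorname{ind}_H^G(A)$ is the ring (pointwise operations) of functions $f:G\to A$ with $f(gh)=h^{-1}f(g)$ for $h\in H$ whose support meets only finitely many cosets $gH$, with $G$-action $(g'f)(g)=f(g'^{-1}g)$; for $s\in G,a\in A$, $\xi_H(s,a)=\sum_{h\in H}h^{-1}(a)\chi_{sh}$, $\chi_t$ the characteristic function of $\{t\}$. Crossed product: $B\rtimes G=B\otimes\mathbb Z[G]$ with $(b\rtimes g)(b'\rtimes g')=b\,g(b')\rtimes gg'$. $M_{G/H}(B)$ denotes $G/H\times G/H$ matrices over $B$ with finitely many nonzero entries, with matrix units $e_{x,y}$. $A^{(G)}$ is the set of finitely supported functions $G\to A$; it is a left $\operatorname{ind}_H^G(A)\rtimes G$-module (pointwise multiplication and left translation) and a right $A\rtimes H$-module via $[\phi\cdot(a\rtimes h)](g)=h^{-1}(\phi(gh^{-1})a)$. *)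

theory Defs
  imports "HOL-Algebra.Left_Coset" "HOL-Library.Function_Algebras"
begin

text \<open>All "functions on G" are total HOL functions which are 0 outside the relevant carrier.
  Addition of all rings below is pointwise addition of functions (Function_Algebras).\<close>

definition H_ring :: "('g,'m) monoid_scheme \<Rightarrow> 'g set \<Rightarrow> ('g \<Rightarrow> 'a::ring \<Rightarrow> 'a) \<Rightarrow> bool" where
  "H_ring G H act \<longleftrightarrow>
     (\<forall>h\<in>H. \<forall>a b. act h (a + b) = act h a + act h b \<and> act h (a * b) = act h a * act h b) \<and>
     (\<forall>a. act \<one>\<^bsub>G\<^esub> a = a) \<and>
     (\<forall>h\<in>H. \<forall>h'\<in>H. \<forall>a. act (h \<otimes>\<^bsub>G\<^esub> h') a = act h (act h' a))"

definition H_ring_hom :: "'g set \<Rightarrow> ('g \<Rightarrow> 'a::ring \<Rightarrow> 'a) \<Rightarrow> ('g \<Rightarrow> 'b::ring \<Rightarrow> 'b) \<Rightarrow> ('a \<Rightarrow> 'b) \<Rightarrow> bool" where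
  "H_ring_hom H act act' f \<longleftrightarrow>
     (\<forall>a b. f (a + b) = f a + f b \<and> f (a * b) = f a * f b) \<and>
     (\<forall>h\<in>H. \<forall>a. f (act h a) = act' h (f a))"

text \<open>ind_H^G(A): functions f : G \<rightarrow> A with f(gh) = h^{-1} f(g), support meeting finitely many cosets gH.
  Its multiplication is pointwise (the times-instance on functions).\<close>
definition ind :: "('g,'m) monoid_scheme \<Rightarrow> 'g set \<Rightarrow> ('g \<Rightarrow> 'a::ring \<Rightarrow> 'a) \<Rightarrow> ('g \<Rightarrow> 'a) set" where
  "ind G H act = {f. (\<forall>g. g \<notin> carrier G \<longrightarrow> f g = 0) \<and>
      (\<forall>g\<in>carrier G. \<forall>h\<in>H. f (g \<otimes>\<^bsub>G\<^esub> h) = act (inv\<^bsub>G\<^esub> h) (f g)) \<and>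
      finite {g <#\<^bsub>G\<^esub> H | g. g \<in> carrier G \<and> f g \<noteq> 0}}"

definition ind_act :: "('g,'m) monoid_scheme \<Rightarrow> 'g \<Rightarrow> ('g \<Rightarrow> 'a::zero) \<Rightarrow> ('g \<Rightarrow> 'a)" where
  "ind_act G g' f = (\<lambda>g. if g \<in> carrier G then f (inv\<^bsub>G\<^esub> g' \<otimes>\<^bsub>G\<^esub> g) else 0)"

text \<open>xi_H(s,a) = sum_{h in H} h^{-1}(a) chi_{sh}.\<close>
definition xi :: "('g,'m) monoid_scheme \<Rightarrow> 'g set \<Rightarrow> ('g \<Rightarrow> 'a::ring \<Rightarrow> 'a) \<Rightarrow> 'g \<Rightarrow> 'a \<Rightarrow> ('g \<Rightarrow> 'a)" where
  "xi G H act s a = (\<lambda>g. if g \<in> s <#\<^bsub>G\<^esub> H then act (inv\<^bsub>G\<^esub> (inv\<^bsub>G\<^esub> s \<otimes>\<^bsub>G\<^esub> g)) a else 0)"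

text \<open>Crossed product B \<rtimes> K (K a subgroup of G acting on B), elements sum_k b_k \<rtimes> k
  represented as finitely supported functions K \<rightarrow> B.\<close>
definition cp_carrier :: "'b::zero set \<Rightarrow> 'g set \<Rightarrow> ('g \<Rightarrow> 'b) set" where
  "cp_carrier CB K = {F. (\<forall>k\<in>K. F k \<in> CB) \<and> (\<forall>k. k \<notin> K \<longrightarrow> F k = 0) \<and> finite {k. F k \<noteq> 0}}"

definition cp_single :: "'b::zero \<Rightarrow> 'g \<Rightarrow> ('g \<Rightarrow> 'b)" where
  "cp_single b g = (\<lambda>k. if k = g then b else 0)"

text \<open>(b \<rtimes> g)(b' \<rtimes> g') = b g(b') \<rtimes> gg', extended bilinearly.\<close>
definition cp_mult :: "('b \<Rightarrow> 'b \<Rightarrow> 'b) \<Rightarrow> ('g \<Rightarrow> 'b \<Rightarrow> 'b) \<Rightarrow> ('g,'m) monoid_scheme \<Rightarrow> 'g set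
      \<Rightarrow> ('g \<Rightarrow> 'b::comm_monoid_add) \<Rightarrow> ('g \<Rightarrow> 'b) \<Rightarrow> ('g \<Rightarrow> 'b)" where
  "cp_mult mul act G K F F' = (\<lambda>k. if k \<in> K then
      (\<Sum>g\<in>{g\<in>K. F g \<noteq> 0}. mul (F g) (act g (F' (inv\<^bsub>G\<^esub> g \<otimes>\<^bsub>G\<^esub> k)))) else 0)"

abbreviation AH_carrier :: "'g set \<Rightarrow> ('g \<Rightarrow> 'a::ring) set" where
  "AH_carrier H \<equiv> cp_carrier (UNIV :: 'a set) H"

abbreviation AH_mult :: "('g,'m) monoid_scheme \<Rightarrow> 'g set \<Rightarrow> ('g \<Rightarrow> 'a::ring \<Rightarrow> 'a)
    \<Rightarrow> ('g \<Rightarrow> 'a) \<Rightarrow> ('g \<Rightarrow> 'a) \<Rightarrow> ('g \<Rightarrow> 'a)" where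
  "AH_mult G H act \<equiv> cp_mult (*) act G H"

abbreviation indG_carrier :: "('g,'m) monoid_scheme \<Rightarrow> 'g set \<Rightarrow> ('g \<Rightarrow> 'a::ring \<Rightarrow> 'a)
    \<Rightarrow> ('g \<Rightarrow> 'g \<Rightarrow> 'a) set" where
  "indG_carrier G H act \<equiv> cp_carrier (ind G H act) (carrier G)"

abbreviation indG_mult :: "('g,'m) monoid_scheme \<Rightarrow> ('g \<Rightarrow> 'g \<Rightarrow> 'a::ring)
    \<Rightarrow> ('g \<Rightarrow> 'g \<Rightarrow> 'a) \<Rightarrow> ('g \<Rightarrow> 'g \<Rightarrow> 'a)" where
  "indG_mult G \<equiv> cp_mult (*) (ind_act G) G (carrier G)"

definition mat_carrier :: "('g,'m) monoid_scheme \<Rightarrow> 'g set \<Rightarrow> 'b::zero set \<Rightarrow> ('g set \<times> 'g set \<Rightarrow> 'b) set" where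
  "mat_carrier G H CB = {M. (\<forall>x y. M (x, y) \<in> CB) \<and>
      (\<forall>x y. (x \<notin> lcosets\<^bsub>G\<^esub> H \<or> y \<notin> lcosets\<^bsub>G\<^esub> H) \<longrightarrow> M (x, y) = 0) \<and>
      finite {p. M p \<noteq> 0}}"

definition mat_mult :: "('b \<Rightarrow> 'b \<Rightarrow> 'b::comm_monoid_add) \<Rightarrow> ('g set \<times> 'g set \<Rightarrow> 'b)
    \<Rightarrow> ('g set \<times> 'g set \<Rightarrow> 'b) \<Rightarrow> ('g set \<times> 'g set \<Rightarrow> 'b)" where
  "mat_mult mul M N = (\<lambda>(x, z). \<Sum>y\<in>{y. M (x, y) \<noteq> 0}. mul (M (x, y)) (N (y, z)))"

definition mat_unit :: "'g set \<Rightarrow> 'g set \<Rightarrow> 'b::zero \<Rightarrow> ('g set \<times> 'g set \<Rightarrow> 'b)" where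
  "mat_unit x y b = (\<lambda>p. if p = (x, y) then b else 0)"

text \<open>Ring isomorphism (rings not necessarily unital; addition is pointwise on both sides).\<close>
definition ring_iso_betw :: "('r \<Rightarrow> 's) \<Rightarrow> 'r::plus set \<Rightarrow> ('r \<Rightarrow> 'r \<Rightarrow> 'r)
    \<Rightarrow> 's::plus set \<Rightarrow> ('s \<Rightarrow> 's \<Rightarrow> 's) \<Rightarrow> bool" where
  "ring_iso_betw \<alpha> CR mulR CS mulS \<longleftrightarrow> bij_betw \<alpha> CR CS \<and>
     (\<forall>x\<in>CR. \<forall>y\<in>CR. \<alpha> (x + y) = \<alpha> x + \<alpha> y \<and> \<alpha> (mulR x y) = mulS (\<alpha> x) (\<alpha> y))"

text \<open>A set of representatives of G/H containing 1, given as a choice function on cosets;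
  hat s = rep (sH) and phi(s) = hat s^{-1} s.\<close>
definition rep_system :: "('g,'m) monoid_scheme \<Rightarrow> 'g set \<Rightarrow> ('g set \<Rightarrow> 'g) \<Rightarrow> bool" where
  "rep_system G H rep \<longleftrightarrow> (\<forall>x\<in>lcosets\<^bsub>G\<^esub> H. rep x \<in> x) \<and> rep H = \<one>\<^bsub>G\<^esub>"

definition phi :: "('g,'m) monoid_scheme \<Rightarrow> 'g set \<Rightarrow> ('g set \<Rightarrow> 'g) \<Rightarrow> 'g \<Rightarrow> 'g" where
  "phi G H rep s = inv\<^bsub>G\<^esub> (rep (s <#\<^bsub>G\<^esub> H)) \<otimes>\<^bsub>G\<^esub> s"

text \<open>The explicit map alpha, i.e. the additive extension of
  xi_H(r,a) \<rtimes> g \<mapsto> e_{rH, g^{-1}rH} \<otimes> (a \<rtimes> phi(g^{-1}r)^{-1}) for representatives r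
  (every element of ind is sum over representatives r of xi_H(r, f(r))).\<close>
definition alpha :: "('g,'m) monoid_scheme \<Rightarrow> 'g set \<Rightarrow> ('g set \<Rightarrow> 'g)
    \<Rightarrow> ('g \<Rightarrow> 'g \<Rightarrow> 'a::ring) \<Rightarrow> ('g set \<times> 'g set \<Rightarrow> 'g \<Rightarrow> 'a)" where
  "alpha G H rep X = (\<lambda>(x, y). \<lambda>k.
     if x \<in> lcosets\<^bsub>G\<^esub> H \<and> y \<in> lcosets\<^bsub>G\<^esub> H \<and> k \<in> H then
       (\<Sum>g\<in>{g\<in>carrier G. X g \<noteq> 0 \<and> (inv\<^bsub>G\<^esub> g \<otimes>\<^bsub>G\<^esub> rep x) <#\<^bsub>G\<^esub> H = y \<and>
                inv\<^bsub>G\<^esub> (phi G H rep (inv\<^bsub>G\<^esub> g \<otimes>\<^bsub>G\<^esub> rep x)) = k}. X g (rep x))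
     else 0)"

text \<open>The module A^{(G)} and the left action of ind \<rtimes> G on it:
  (f \<rtimes> g) \<phi> = f \<cdot> (g \<phi>) (pointwise product with the left translate).\<close>
definition AG_carrier :: "('g,'m) monoid_scheme \<Rightarrow> ('g \<Rightarrow> 'a::zero) set" where
  "AG_carrier G = {\<phi>. (\<forall>g. g \<notin> carrier G \<longrightarrow> \<phi> g = 0) \<and> finite {g. \<phi> g \<noteq> 0}}"

definition indG_AG_act :: "('g,'m) monoid_scheme \<Rightarrow> ('g \<Rightarrow> 'g \<Rightarrow> 'a::ring) \<Rightarrow> ('g \<Rightarrow> 'a) \<Rightarrow> ('g \<Rightarrow> 'a)" where
  "indG_AG_act G X \<phi> = (\<lambda>x. if x \<in> carrier G then
      (\<Sum>g\<in>{g\<in>carrier G. X g \<noteq> 0}. X g x * \<phi> (inv\<^bsub>G\<^esub> g \<otimes>\<^bsub>G\<^esub> x)) else 0)"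

text \<open>Right A\<rtimes>H-module structure on A^{(G)}: [\<phi>(a \<rtimes> h)](g) = h^{-1}(\<phi>(g h^{-1}) a), extended additively.\<close>
definition AG_right_act :: "('g,'m) monoid_scheme \<Rightarrow> 'g set \<Rightarrow> ('g \<Rightarrow> 'a::ring \<Rightarrow> 'a)
    \<Rightarrow> ('g \<Rightarrow> 'a) \<Rightarrow> ('g \<Rightarrow> 'a) \<Rightarrow> ('g \<Rightarrow> 'a)" where
  "AG_right_act G H act \<phi> x = (\<lambda>g. if g \<in> carrier G then
      (\<Sum>h\<in>{h\<in>H. x h \<noteq> 0}. act (inv\<^bsub>G\<^esub> h) (\<phi> (g \<otimes>\<^bsub>G\<^esub> inv\<^bsub>G\<^esub> h) * x h)) else 0)"

definition vec_carrier :: "('g,'m) monoid_scheme \<Rightarrow> 'g set \<Rightarrow> ('g set \<Rightarrow> 'g \<Rightarrow> 'a::ring) set" where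
  "vec_carrier G H = {v. (\<forall>x. v x \<in> AH_carrier H) \<and> (\<forall>x. x \<notin> lcosets\<^bsub>G\<^esub> H \<longrightarrow> v x = 0) \<and>
      finite {x. v x \<noteq> 0}}"

definition mat_vec :: "('b \<Rightarrow> 'b \<Rightarrow> 'b::comm_monoid_add) \<Rightarrow> ('g set \<times> 'g set \<Rightarrow> 'b)
    \<Rightarrow> ('g set \<Rightarrow> 'b) \<Rightarrow> ('g set \<Rightarrow> 'b)" where
  "mat_vec mul M v = (\<lambda>x. \<Sum>y\<in>{y. M (x, y) \<noteq> 0}. mul (M (x, y)) (v y))"

definition vec_right_act :: "('b \<Rightarrow> 'b \<Rightarrow> 'b) \<Rightarrow> ('g set \<Rightarrow> 'b) \<Rightarrow> 'b \<Rightarrow> ('g set \<Rightarrow> 'b)" where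
  "vec_right_act mul v b = (\<lambda>x. mul (v x) b)"

text \<open>The identification (A\<rtimes>H)^{(G/H)} \<cong> A^{(G)} determined by the representatives:
  the vector with entry c \<rtimes> k in position rH (r the representative) goes to the function
  with value k^{-1}(c) at rk and 0 elsewhere.\<close>
definition ident :: "('g,'m) monoid_scheme \<Rightarrow> 'g set \<Rightarrow> ('g \<Rightarrow> 'a::ring \<Rightarrow> 'a) \<Rightarrow> ('g set \<Rightarrow> 'g)
    \<Rightarrow> ('g set \<Rightarrow> 'g \<Rightarrow> 'a) \<Rightarrow> ('g \<Rightarrow> 'a)" where
  "ident G H act rep v = (\<lambda>g. if g \<in> carrier G then
      act (inv\<^bsub>G\<^esub> (phi G H rep g)) (v (g <#\<^bsub>G\<^esub> H) (phi G H rep g)) else 0)"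

end

theory Submission
  imports Defs
begin

locale L = group G for G :: "('g,'m) monoid_scheme" (structure) +
  fixes H :: "'g set" and act :: "'g \<Rightarrow> 'a::ring \<Rightarrow> 'a" and rep :: "'g set \<Rightarrow> 'g"
  assumes sub: "subgroup H G" and Hr: "H_ring G H act" and rs: "rep_system G H rep"
begin

lemma hG: "h \<in> H \<Longrightarrow> h \<in> carrier G"
  by (rule subgroup.mem_carrier[OF sub])

lemma H_mult: "a \<in> H \<Longrightarrow> b \<in> H \<Longrightarrow> a \<otimes> b \<in> H"
  by (rule subgroup.m_closed[OF sub])

lemma H_inv: "a \<in> H \<Longrightarrow> inv a \<in> H"
  by (rule subgroup.m_inv_closed[OF sub])

lemma H_one: "\<one> \<in> H"
  by (rule subgroup.one_closed[OF sub])

lemma cancel1 [simp]: "x \<in> carrier G \<Longrightarrow> y \<in> carrier G \<Longrightarrow> x \<otimes> (inv x \<otimes> y) = y"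
  by (simp add: m_assoc[symmetric])

lemma cancel2 [simp]: "x \<in> carrier G \<Longrightarrow> y \<in> carrier G \<Longrightarrow> inv x \<otimes> (x \<otimes> y) = y"
  by (simp add: m_assoc[symmetric])

lemmas gsimps = m_assoc inv_mult_group

lemma mem_coset: "a \<in> carrier G \<Longrightarrow> b \<in> a <# H \<longleftrightarrow> b \<in> carrier G \<and> inv a \<otimes> b \<in> H"
proof
  assume a: "a \<in> carrier G" and "b \<in> a <# H"
  then obtain h where h: "h \<in> H" "b = a \<otimes> h" by (auto simp: l_coset_def)
  then show "b \<in> carrier G \<and> inv a \<otimes> b \<in> H"
    using a hG by (simp add: m_assoc[symmetric])
next
  assume a: "a \<in> carrier G" and b: "b \<in> carrier G \<and> inv a \<otimes> b \<in> H"
  then have "b = a \<otimes> (inv a \<otimes> b)" by (simp add: m_assoc[symmetric])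
  then show "b \<in> a <# H" using b by (auto simp: l_coset_def)
qed

lemma coset_eq_iff: "a \<in> carrier G \<Longrightarrow> b \<in> carrier G \<Longrightarrow> (a <# H = b <# H) \<longleftrightarrow> inv a \<otimes> b \<in> H"
proof
  assume a: "a \<in> carrier G" "b \<in> carrier G" and e: "a <# H = b <# H"
  have "inv b \<otimes> b \<in> H" using a H_one by simp
  then have "b \<in> b <# H" using mem_coset[OF a(2), of b] a by simp
  then have "b \<in> a <# H" using e by simp
  then show "inv a \<otimes> b \<in> H" using mem_coset[OF a(1)] by simp
next
  assume a: "a \<in> carrier G" "b \<in> carrier G" and h: "inv a \<otimes> b \<in> H"
  show "a <# H = b <# H"
    unfolding set_eq_iff
  proof (intro allI)
    fix c
    show "c \<in> a <# H \<longleftrightarrow> c \<in> b <# H"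
    proof (cases "c \<in> carrier G")
      case True
      have "(inv a \<otimes> b) \<otimes> (inv b \<otimes> c) = inv a \<otimes> ((b \<otimes> inv b) \<otimes> c)"
        using a True by (simp add: m_assoc)
      then have e1: "inv a \<otimes> c = (inv a \<otimes> b) \<otimes> (inv b \<otimes> c)"
        using a True by simp
      have "inv (inv a \<otimes> b) \<otimes> (inv a \<otimes> c) = inv b \<otimes> ((a \<otimes> inv a) \<otimes> c)"
        using a True by (simp add: inv_mult_group m_assoc)
      then have e2: "inv b \<otimes> c = inv (inv a \<otimes> b) \<otimes> (inv a \<otimes> c)"
        using a True by simp
      have "c \<in> a <# H \<longleftrightarrow> inv a \<otimes> c \<in> H" using mem_coset[OF a(1)] True by simp
      also have "\<dots> \<longleftrightarrow> inv b \<otimes> c \<in> H"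
      proof
        assume "inv a \<otimes> c \<in> H" then show "inv b \<otimes> c \<in> H"
          using e2 H_mult H_inv h by simp
      next
        assume "inv b \<otimes> c \<in> H" then show "inv a \<otimes> c \<in> H"
          using e1 H_mult h by simp
      qed
      also have "\<dots> \<longleftrightarrow> c \<in> b <# H" using mem_coset[OF a(2)] True by simp
      finally show ?thesis .
    next
      case False
      then show ?thesis using mem_coset a by simp
    qed
  qed
qed

lemma coset_mult_H: "a \<in> carrier G \<Longrightarrow> h \<in> H \<Longrightarrow> (a \<otimes> h) <# H = a <# H"
proof -
  assume a: "a \<in> carrier G" and h: "h \<in> H"
  have "inv (a \<otimes> h) \<otimes> a = inv h"
    using a hG[OF h] by (simp add: inv_mult_group m_assoc)
  then show ?thesis using coset_eq_iff[of "a \<otimes> h" a] a hG[OF h] H_inv[OF h] by simp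
qed

lemma in_lcosets: "a \<in> carrier G \<Longrightarrow> a <# H \<in> lcosets H"
  by (auto simp: LCOSETS_def)

lemma lcosetsE: "x \<in> lcosets H \<Longrightarrow> (\<And>a. a \<in> carrier G \<Longrightarrow> x = a <# H \<Longrightarrow> P) \<Longrightarrow> P"
  by (auto simp: LCOSETS_def)

lemma rep_in: "x \<in> lcosets H \<Longrightarrow> rep x \<in> x"
  using rs by (simp add: rep_system_def)

lemma rep_G: "x \<in> lcosets H \<Longrightarrow> rep x \<in> carrier G"
  by (metis lcosetsE mem_coset rep_in)

lemma rep_coset: "x \<in> lcosets H \<Longrightarrow> rep x <# H = x"
  by (metis coset_eq_iff lcosetsE mem_coset rep_in rep_G)

lemma H_lcoset: "H \<in> lcosets H"
  using in_lcosets[OF one_closed] coset_mult_H[OF one_closed] sub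
  by (metis lcos_mult_one subgroup.subset)

lemma one_coset: "\<one> <# H = H"
  using sub by (metis lcos_mult_one subgroup.subset)

lemma rep_H: "rep H = \<one>"
  using rs by (simp add: rep_system_def)

lemma phi_H: "t \<in> carrier G \<Longrightarrow> phi G H rep t \<in> H"
  unfolding phi_def
  by (metis coset_eq_iff in_lcosets rep_G rep_coset)

lemma phi_G: "t \<in> carrier G \<Longrightarrow> phi G H rep t \<in> carrier G"
  using phi_H hG by blast

lemma rep_phi: "t \<in> carrier G \<Longrightarrow> rep (t <# H) \<otimes> phi G H rep t = t"
  unfolding phi_def using rep_G[OF in_lcosets]
  by (simp add: m_assoc[symmetric])

lemma phi_mult: "t \<in> carrier G \<Longrightarrow> h \<in> H \<Longrightarrow> phi G H rep (t \<otimes> h) = phi G H rep t \<otimes> h"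
  unfolding phi_def using coset_mult_H rep_G[OF in_lcosets] hG by (simp add: m_assoc)

lemma coset_rep_mult: "x \<in> lcosets H \<Longrightarrow> k \<in> H \<Longrightarrow> (rep x \<otimes> k) <# H = x"
  using coset_mult_H rep_G rep_coset by simp

lemma phi_rep: "x \<in> lcosets H \<Longrightarrow> k \<in> H \<Longrightarrow> phi G H rep (rep x \<otimes> k) = k"
  unfolding phi_def using coset_rep_mult rep_G hG by (simp add: m_assoc[symmetric])

lemma phi_rep1: "x \<in> lcosets H \<Longrightarrow> phi G H rep (rep x) = \<one>"
  using phi_rep[OF _ H_one] rep_G by simp

end

context L begin

lemma act_add: "h \<in> H \<Longrightarrow> act h (a + b) = act h a + act h b"
  using Hr by (simp add: H_ring_def)
lemma act_mult: "h \<in> H \<Longrightarrow> act h (a * b) = act h a * act h b"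
  using Hr by (simp add: H_ring_def)
lemma act_one [simp]: "act \<one> a = a"
  using Hr by (simp add: H_ring_def)
lemma act_comp: "h \<in> H \<Longrightarrow> h' \<in> H \<Longrightarrow> act (h \<otimes> h') a = act h (act h' a)"
  using Hr by (simp add: H_ring_def)
lemma act_zero: "h \<in> H \<Longrightarrow> act h 0 = 0"
proof -
  assume h: "h \<in> H"
  have "act h 0 = act h 0 + act h 0" using act_add[OF h, of 0 0] by simp
  then show ?thesis by simp
qed
lemma act_inv1: "h \<in> H \<Longrightarrow> act (inv h) (act h a) = a"
  using act_comp[of "inv h" h a] H_inv hG by simp
lemma act_inv2: "h \<in> H \<Longrightarrow> act h (act (inv h) a) = a"
  using act_comp[of h "inv h" a] H_inv hG by simp
lemma act_inj: "h \<in> H \<Longrightarrow> act h a = act h b \<longleftrightarrow> a = b"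
  by (metis act_inv1)
lemma act_eq0: "h \<in> H \<Longrightarrow> act h a = 0 \<longleftrightarrow> a = 0"
  by (metis act_inv1 act_zero)
lemma act_sum: "h \<in> H \<Longrightarrow> act h (\<Sum>i\<in>S. f i) = (\<Sum>i\<in>S. act h (f i))"
proof (induction S rule: infinite_finite_induct)
  case (infinite A) then show ?case by (simp add: act_zero)
next
  case empty then show ?case by (simp add: act_zero)
next
  case (insert x F) then show ?case by (simp add: act_add)
qed

lemma LEQ:
  assumes r: "r \<in> carrier G" and g: "g \<in> carrier G" and y: "y \<in> lcosets H" and k: "k \<in> H"
  shows "(g = r \<otimes> k \<otimes> inv (rep y)) \<longleftrightarrow> ((inv g \<otimes> r) <# H = y \<and> inv (phi G H rep (inv g \<otimes> r)) = k)"
proof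
  have q: "rep y \<in> carrier G" using rep_G[OF y] .
  have kG: "k \<in> carrier G" using hG[OF k] .
  assume e: "g = r \<otimes> k \<otimes> inv (rep y)"
  have t: "inv g \<otimes> r = rep y \<otimes> inv k"
    using e r q kG by (simp add: gsimps)
  show "(inv g \<otimes> r) <# H = y \<and> inv (phi G H rep (inv g \<otimes> r)) = k"
    unfolding t using coset_rep_mult[OF y H_inv[OF k]] phi_rep[OF y H_inv[OF k]] kG by simp
next
  have q: "rep y \<in> carrier G" using rep_G[OF y] .
  have kG: "k \<in> carrier G" using hG[OF k] .
  assume e: "(inv g \<otimes> r) <# H = y \<and> inv (phi G H rep (inv g \<otimes> r)) = k"
  define t where "t = inv g \<otimes> r"
  have tG: "t \<in> carrier G" using r g by (simp add: t_def)
  have pt: "phi G H rep t = inv k" using e t_def phi_G[OF tG] by (metis inv_inv)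
  have "rep (t <# H) \<otimes> phi G H rep t = t" using rep_phi[OF tG] .
  then have tt: "t = rep y \<otimes> inv k" using e pt t_def by simp
  have "g = r \<otimes> inv t" using r g by (simp add: t_def gsimps)
  also have "\<dots> = r \<otimes> k \<otimes> inv (rep y)" using tt q kG r by (simp add: gsimps)
  finally show "g = r \<otimes> k \<otimes> inv (rep y)" .
qed

lemma decomp:
  assumes r: "r \<in> carrier G" and g: "g \<in> carrier G"
  shows "(inv g \<otimes> r) <# H \<in> lcosets H" "inv (phi G H rep (inv g \<otimes> r)) \<in> H"
    "g = r \<otimes> inv (phi G H rep (inv g \<otimes> r)) \<otimes> inv (rep ((inv g \<otimes> r) <# H))"
proof -
  show y: "(inv g \<otimes> r) <# H \<in> lcosets H" using r g in_lcosets by simp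
  show k: "inv (phi G H rep (inv g \<otimes> r)) \<in> H" using H_inv phi_H r g by simp
  show "g = r \<otimes> inv (phi G H rep (inv g \<otimes> r)) \<otimes> inv (rep ((inv g \<otimes> r) <# H))"
    using LEQ[OF r g y k] by simp
qed

lemma alpha_cf: "alpha G H rep X (x, y) = (\<lambda>k. if x \<in> lcosets H \<and> y \<in> lcosets H \<and> k \<in> H
    then X (rep x \<otimes> k \<otimes> inv (rep y)) (rep x) else 0)"
proof
  fix k
  show "alpha G H rep X (x, y) k = (if x \<in> lcosets H \<and> y \<in> lcosets H \<and> k \<in> H
    then X (rep x \<otimes> k \<otimes> inv (rep y)) (rep x) else 0)"
  proof (cases "x \<in> lcosets H \<and> y \<in> lcosets H \<and> k \<in> H")
    case True
    define g0 where "g0 = rep x \<otimes> k \<otimes> inv (rep y)"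
    have g0G: "g0 \<in> carrier G" using True rep_G hG by (simp add: g0_def)
    have S: "{g\<in>carrier G. X g \<noteq> 0 \<and> (inv g \<otimes> rep x) <# H = y \<and>
                inv (phi G H rep (inv g \<otimes> rep x)) = k} = (if X g0 \<noteq> 0 then {g0} else {})"
    proof -
      have "\<And>g. g \<in> carrier G \<Longrightarrow> ((inv g \<otimes> rep x) <# H = y \<and>
                inv (phi G H rep (inv g \<otimes> rep x)) = k) \<longleftrightarrow> g = g0"
        using LEQ[of "rep x" _ y k] True rep_G unfolding g0_def by simp
      then show ?thesis using g0G by auto
    qed
    show ?thesis unfolding alpha_def using True S by (simp add: g0_def)
  next
    case False
    then show ?thesis unfolding alpha_def by auto
  qed
qed

end

context L begin

lemma naturality:
  assumes f: "H_ring_hom H act act' f"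
  shows "alpha G H rep (\<lambda>g. f \<circ> X g) = (\<lambda>p. f \<circ> alpha G H rep X p)"
proof -
  have f0: "f 0 = 0"
  proof -
    have "f 0 = f 0 + f 0" using f unfolding H_ring_hom_def by (metis add_0)
    then show ?thesis by simp
  qed
  show ?thesis
  proof
    fix p show "alpha G H rep (\<lambda>g. f \<circ> X g) p = f \<circ> alpha G H rep X p"
      by (cases p) (auto simp: alpha_cf f0)
  qed
qed

lemma rep_in_H: "x \<in> lcosets H \<Longrightarrow> rep x \<in> H \<longleftrightarrow> x = H"
proof
  assume x: "x \<in> lcosets H" and r: "rep x \<in> H"
  have "rep x <# H = \<one> <# H" using coset_eq_iff[of "rep x" \<one>] rep_G[OF x] r H_inv by simp
  then show "x = H" using rep_coset[OF x] one_coset by simp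
next
  assume "x = H" then show "rep x \<in> H" using rep_H H_one by simp
qed

lemma rep_in_coset: "x \<in> lcosets H \<Longrightarrow> s \<in> carrier G \<Longrightarrow> rep x \<in> s <# H \<longleftrightarrow> x = s <# H"
  using mem_coset[of s "rep x"] coset_eq_iff[of s "rep x"] rep_G rep_coset by auto

lemma part3:
  fixes b :: "'g \<Rightarrow> 'a"
  assumes b: "b \<in> AH_carrier H"
  shows "alpha G H rep (\<lambda>g. xi G H act \<one> (b g)) = mat_unit H H b"
proof
  fix p :: "'g set \<times> 'g set"
  obtain x y where p: "p = (x, y)" by (cases p)
  have b0: "\<And>k. k \<notin> H \<Longrightarrow> b k = 0" using b by (simp add: cp_carrier_def)
  show "alpha G H rep (\<lambda>g. xi G H act \<one> (b g)) p = mat_unit H H b p"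
  proof
    fix k
    show "alpha G H rep (\<lambda>g. xi G H act \<one> (b g)) p k = mat_unit H H b p k"
    proof (cases "x \<in> lcosets H \<and> y \<in> lcosets H \<and> k \<in> H")
      case True
      then have xl: "x \<in> lcosets H" and yl: "y \<in> lcosets H" and k: "k \<in> H" by auto
      show ?thesis
      proof (cases "x = H")
        case xH: True
        have r1: "rep x = \<one>" using xH rep_H by simp
        show ?thesis
        proof (cases "y = H")
          case True
          then show ?thesis using xH r1 k hG[OF k] H_one one_coset rep_H H_lcoset
            by (simp add: p alpha_cf xi_def mat_unit_def)
        next
          case False
          have "k \<otimes> inv (rep y) \<notin> H"
          proof
            assume "k \<otimes> inv (rep y) \<in> H"
            then have "inv (k \<otimes> inv (rep y)) \<otimes> k \<in> H" using H_inv H_mult k by simp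
            moreover have "inv (k \<otimes> inv (rep y)) \<otimes> k = rep y"
              using hG[OF k] rep_G[OF yl] by (simp add: gsimps)
            ultimately show False using rep_in_H[OF yl] False by simp
          qed
          then show ?thesis using xH r1 k hG[OF k] H_one one_coset rep_H False b0 rep_G[OF yl]
            by (simp add: p alpha_cf xi_def mat_unit_def)
        qed
      next
        case False
        then have "rep x \<notin> H" using rep_in_H[OF xl] by simp
        then show ?thesis using False one_coset True by (simp add: p alpha_cf xi_def mat_unit_def)
      qed
    next
      case False
      have "k \<notin> H \<Longrightarrow> b k = 0" using b0 by simp
      then show ?thesis using False H_lcoset by (auto simp: p alpha_cf mat_unit_def)
    qed
  qed
qed

end

context L begin

lemma part2:
  fixes a :: 'a
  assumes s: "s \<in> carrier G" and g: "g \<in> carrier G"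
  shows "alpha G H rep (cp_single (xi G H act s a) g) =
          mat_unit (s <# H) ((inv g \<otimes> s) <# H)
            (cp_single (act (phi G H rep s) a)
               (phi G H rep s \<otimes> inv (phi G H rep (inv g \<otimes> s))))"
proof
  fix p :: "'g set \<times> 'g set"
  obtain x y where p: "p = (x, y)" by (cases p)
  define r where "r = rep (s <# H)"
  define ps where "ps = phi G H rep s"
  have sl: "s <# H \<in> lcosets H" using in_lcosets[OF s] .
  have rG: "r \<in> carrier G" using rep_G[OF sl] r_def by simp
  have psH: "ps \<in> H" using phi_H[OF s] ps_def by simp
  have psG: "ps \<in> carrier G" using hG[OF psH] .
  have srp: "s = r \<otimes> ps" using rep_phi[OF s] r_def ps_def by simp
  have isr: "inv (inv s \<otimes> r) = ps" using srp rG psG by (simp add: gsimps)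
  define t where "t = inv g \<otimes> r"
  have tG: "t \<in> carrier G" using g rG t_def by simp
  have ts: "inv g \<otimes> s = t \<otimes> ps" using srp t_def g rG psG by (simp add: gsimps)
  have cy: "(inv g \<otimes> s) <# H = t <# H" using ts coset_mult_H[OF tG psH] by simp
  have ck: "ps \<otimes> inv (phi G H rep (inv g \<otimes> s)) = inv (phi G H rep t)"
    using ts phi_mult[OF tG psH] phi_G[OF tG] psG by (simp add: gsimps)
  show "alpha G H rep (cp_single (xi G H act s a) g) p = mat_unit (s <# H) ((inv g \<otimes> s) <# H)
            (cp_single (act (phi G H rep s) a)
               (phi G H rep s \<otimes> inv (phi G H rep (inv g \<otimes> s)))) p"
  proof
    fix k
    show "alpha G H rep (cp_single (xi G H act s a) g) p k = mat_unit (s <# H) ((inv g \<otimes> s) <# H)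
            (cp_single (act (phi G H rep s) a)
               (phi G H rep s \<otimes> inv (phi G H rep (inv g \<otimes> s)))) p k"
    proof (cases "x = s <# H \<and> y \<in> lcosets H \<and> k \<in> H")
      case True
      then have xs: "x = s <# H" and yl: "y \<in> lcosets H" and k: "k \<in> H" by auto
      have rx: "rep x = r" using xs r_def by simp
      have eq: "(r \<otimes> k \<otimes> inv (rep y) = g) \<longleftrightarrow> (y = t <# H \<and> k = inv (phi G H rep t))"
        using LEQ[OF rG g yl k] t_def by auto
      have xi_r: "xi G H act s a r = act ps a"
        unfolding xi_def using rep_in_coset[OF sl s] isr r_def by simp
      show ?thesis
        using True sl rx eq xi_r cy ck
        by (auto simp: p alpha_cf cp_single_def mat_unit_def ps_def)
    next
      case False
      have "x \<in> lcosets H \<Longrightarrow> rep x \<in> s <# H \<Longrightarrow> x = s <# H" using rep_in_coset s by blast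
      then have A: "alpha G H rep (cp_single (xi G H act s a) g) p k = 0"
        using False by (auto simp: p alpha_cf cp_single_def xi_def)
      have "(inv g \<otimes> s) <# H \<in> lcosets H" using in_lcosets g s by simp
      moreover have "ps \<otimes> inv (phi G H rep (inv g \<otimes> s)) \<in> H"
        using H_mult H_inv phi_H psH g s by simp
      ultimately have "mat_unit (s <# H) ((inv g \<otimes> s) <# H)
            (cp_single (act (phi G H rep s) a)
               (phi G H rep s \<otimes> inv (phi G H rep (inv g \<otimes> s)))) p k = 0"
        using False by (auto simp: p mat_unit_def cp_single_def ps_def)
      then show ?thesis using A by simp
    qed
  qed
qed

end

context L begin

lemma vecD: "v \<in> vec_carrier G H \<Longrightarrow> finite {x. v x \<noteq> 0}"
  "v \<in> vec_carrier G H \<Longrightarrow> finite {k. v x k \<noteq> 0}"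
  "v \<in> vec_carrier G H \<Longrightarrow> k \<notin> H \<Longrightarrow> v x k = 0"
  "v \<in> vec_carrier G H \<Longrightarrow> x \<notin> lcosets H \<Longrightarrow> v x = 0"
  by (auto simp: vec_carrier_def cp_carrier_def)

lemma AHD: "b \<in> AH_carrier H \<Longrightarrow> finite {k. b k \<noteq> 0}"
  "b \<in> AH_carrier H \<Longrightarrow> k \<notin> H \<Longrightarrow> b k = 0"
  by (auto simp: cp_carrier_def)

lemma part6: "ident G H act rep (v + w) = ident G H act rep v + ident G H act rep w"
  unfolding ident_def by (rule ext) (simp add: act_add H_inv phi_H)

lemma ident_in:
  assumes v: "v \<in> vec_carrier G H"
  shows "ident G H act rep v \<in> AG_carrier G"
proof -
  have "{g. ident G H act rep v g \<noteq> 0} \<subseteq>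
      (\<lambda>(x, k). rep x \<otimes> k) ` (SIGMA x:{x. v x \<noteq> 0}. {k. v x k \<noteq> 0})"
  proof
    fix g assume "g \<in> {g. ident G H act rep v g \<noteq> 0}"
    then have g: "g \<in> carrier G" and nz: "v (g <# H) (phi G H rep g) \<noteq> 0"
      unfolding ident_def by (auto split: if_splits simp: act_zero H_inv phi_H)
    have "g = rep (g <# H) \<otimes> phi G H rep g" using rep_phi[OF g] by simp
    then show "g \<in> (\<lambda>(x, k). rep x \<otimes> k) ` (SIGMA x:{x. v x \<noteq> 0}. {k. v x k \<noteq> 0})"
      using nz by (auto intro!: image_eqI[of _ _ "(g <# H, phi G H rep g)"])
  qed
  moreover have "finite (SIGMA x:{x. v x \<noteq> 0}. {k. v x k \<noteq> 0})"
    using vecD[OF v] by (intro finite_SigmaI) auto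
  ultimately have "finite {g. ident G H act rep v g \<noteq> 0}" by (meson finite_imageI finite_subset)
  then show ?thesis unfolding AG_carrier_def by (auto simp: ident_def)
qed

lemma ident_at: "x \<in> lcosets H \<Longrightarrow> k \<in> H \<Longrightarrow>
    ident G H act rep v (rep x \<otimes> k) = act (inv k) (v x k)"
  unfolding ident_def using rep_G hG coset_rep_mult phi_rep by simp

lemma ident_inj: "inj_on (ident G H act rep) (vec_carrier G H)"
proof (rule inj_onI)
  fix v w assume v: "v \<in> vec_carrier G H" and w: "w \<in> vec_carrier G H"
    and e: "ident G H act rep v = ident G H act rep w"
  show "v = w"
  proof (intro ext)
    fix x k
    show "v x k = w x k"
    proof (cases "x \<in> lcosets H \<and> k \<in> H")
      case True
      then have "act (inv k) (v x k) = act (inv k) (w x k)" using e ident_at by metis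
      then show ?thesis using act_inj H_inv True by blast
    next
      case False
      have "v x k = 0" using False vecD(3)[OF v] vecD(4)[OF v] by (metis zero_fun_apply)
      moreover have "w x k = 0" using False vecD(3)[OF w] vecD(4)[OF w] by (metis zero_fun_apply)
      ultimately show ?thesis by simp
    qed
  qed
qed

lemma ident_surj:
  assumes ph: "\<phi> \<in> AG_carrier G"
  shows "\<exists>v\<in>vec_carrier G H. ident G H act rep v = \<phi>"
proof -
  define v where "v = (\<lambda>x k. if x \<in> lcosets H \<and> k \<in> H then act k (\<phi> (rep x \<otimes> k)) else 0)"
  have ph0: "\<And>g. g \<notin> carrier G \<Longrightarrow> \<phi> g = 0" and phf: "finite {g. \<phi> g \<noteq> 0}"
    using ph by (auto simp: AG_carrier_def)
  have vin: "v \<in> vec_carrier G H"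
    unfolding vec_carrier_def cp_carrier_def
  proof (intro CollectI conjI allI impI)
    fix x
    show "finite {k. v x k \<noteq> 0}"
    proof (cases "x \<in> lcosets H")
      case True
      show ?thesis
      proof (rule finite_subset)
        show "{k. v x k \<noteq> 0} \<subseteq> (\<lambda>k. rep x \<otimes> k) -` {g. \<phi> g \<noteq> 0} \<inter> H"
          by (auto simp: v_def act_zero)
        show "finite ((\<lambda>k. rep x \<otimes> k) -` {g. \<phi> g \<noteq> 0} \<inter> H)"
          by (rule finite_vimage_IntI[OF phf]) (use True rep_G hG in \<open>auto simp: inj_on_def\<close>)
      qed
    next
      case False
      then show ?thesis by (simp add: v_def)
    qed
  next
    show "finite {x. v x \<noteq> 0}"
    proof (rule finite_subset)
      show "{x. v x \<noteq> 0} \<subseteq> (\<lambda>g. g <# H) ` {g. \<phi> g \<noteq> 0}"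
      proof
        fix x assume "x \<in> {x. v x \<noteq> 0}"
        then have "v x \<noteq> 0" by simp
        then obtain k where k: "x \<in> lcosets H" "k \<in> H" "\<phi> (rep x \<otimes> k) \<noteq> 0"
        proof -
          assume "v x \<noteq> 0"
          then obtain k where "v x k \<noteq> 0" by (auto simp: fun_eq_iff)
          then show thesis using that by (auto simp: v_def act_eq0 split: if_splits)
        qed
        then show "x \<in> (\<lambda>g. g <# H) ` {g. \<phi> g \<noteq> 0}"
          using coset_rep_mult by (auto intro!: image_eqI[of _ _ "rep x \<otimes> k"])
      qed
      show "finite ((\<lambda>g. g <# H) ` {g. \<phi> g \<noteq> 0})" using phf by simp
    qed
  qed (auto simp: v_def)
  have "ident G H act rep v = \<phi>"
  proof
    fix g show "ident G H act rep v g = \<phi> g"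
    proof (cases "g \<in> carrier G")
      case True
      then show ?thesis unfolding ident_def v_def
        using in_lcosets phi_H rep_phi act_inv1 by simp
    next
      case False then show ?thesis using ph0 by (simp add: ident_def)
    qed
  qed
  then show ?thesis using vin by blast
qed

lemma part5: "bij_betw (ident G H act rep) (vec_carrier G H) (AG_carrier G)"
  unfolding bij_betw_def using ident_inj ident_in ident_surj by blast

end

context L begin

lemma part7:
  assumes v: "v \<in> vec_carrier G H" and b: "b \<in> AH_carrier H"
  shows "ident G H act rep (vec_right_act (AH_mult G H act) v b) =
          AG_right_act G H act (ident G H act rep v) b"
proof
  fix g
  show "ident G H act rep (vec_right_act (AH_mult G H act) v b) g =
          AG_right_act G H act (ident G H act rep v) b g"
  proof (cases "g \<in> carrier G")
    case False then show ?thesis by (simp add: ident_def AG_right_act_def)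
  next
    case gG: True
    define p where "p = phi G H rep g"
    define vx where "vx = v (g <# H)"
    have pH: "p \<in> H" using phi_H[OF gG] p_def by simp
    have pG: "p \<in> carrier G" using hG[OF pH] .
    have ipH: "inv p \<in> H" using H_inv[OF pH] .
    define F where "F = (\<lambda>h. act (inv p) (vx h) * act (inv p \<otimes> h) (b (inv h \<otimes> p)))"
    define G' where "G' = (\<lambda>h. act (inv p) (vx (p \<otimes> inv h)) * act (inv h) (b h))"
    define S1 where "S1 = {h \<in> H. vx h \<noteq> 0}"
    define S2 where "S2 = {h \<in> H. b h \<noteq> 0}"
    define S where "S = {h \<in> H. vx h \<noteq> 0 \<and> b (inv h \<otimes> p) \<noteq> 0}"
    define \<sigma> where "\<sigma> = (\<lambda>h. inv h \<otimes> p)"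
    have fS1: "finite S1" using vecD(2)[OF v] unfolding S1_def vx_def by (rule finite_subset[rotated]) auto
    have fS2: "finite S2" using AHD(1)[OF b] unfolding S2_def by (rule finite_subset[rotated]) auto
    have LHS: "ident G H act rep (vec_right_act (AH_mult G H act) v b) g = sum F S1"
    proof -
      have "ident G H act rep (vec_right_act (AH_mult G H act) v b) g =
          act (inv p) (\<Sum>h\<in>S1. vx h * act h (b (inv h \<otimes> p)))"
        using gG pH by (simp add: ident_def vec_right_act_def cp_mult_def p_def vx_def S1_def)
      also have "\<dots> = sum F S1"
        unfolding act_sum[OF ipH] F_def S1_def
        by (rule sum.cong) (auto simp: act_mult ipH act_comp)
      finally show ?thesis .
    qed
    have RHS: "AG_right_act G H act (ident G H act rep v) b g = sum G' S2"
      unfolding AG_right_act_def S2_def using gG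
    proof (simp, intro sum.cong refl)
      fix h assume h: "h \<in> {h \<in> H. b h \<noteq> 0}"
      then have hH: "h \<in> H" and hG': "h \<in> carrier G" using hG by auto
      have ghG: "g \<otimes> inv h \<in> carrier G" using gG hG' by simp
      have c: "(g \<otimes> inv h) <# H = g <# H" using coset_mult_H[OF gG H_inv[OF hH]] .
      have ph: "phi G H rep (g \<otimes> inv h) = p \<otimes> inv h" using phi_mult[OF gG H_inv[OF hH]] p_def by simp
      have ip: "inv (p \<otimes> inv h) = h \<otimes> inv p" using pG hG' by (simp add: gsimps)
      have "ident G H act rep v (g \<otimes> inv h) = act (h \<otimes> inv p) (vx (p \<otimes> inv h))"
        using ghG c ph ip by (simp add: ident_def vx_def)
      then show "act (inv h) (ident G H act rep v (g \<otimes> inv h) * b h) = G' h"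
        unfolding G'_def
        using hH ipH H_inv H_mult hG' pG
        by (simp add: act_mult act_comp[symmetric] gsimps)
    qed
    have "sum F S1 = sum F S"
      by (rule sum.mono_neutral_right[OF fS1]) (auto simp: S1_def S_def F_def act_zero H_mult ipH)
    moreover have "sum G' S2 = sum G' (\<sigma> ` S)"
    proof (rule sum.mono_neutral_right[OF fS2])
      show "\<sigma> ` S \<subseteq> S2" unfolding S_def S2_def \<sigma>_def using H_mult H_inv pH by auto
      show "\<forall>i\<in>S2 - \<sigma> ` S. G' i = 0"
      proof
        fix h' assume h': "h' \<in> S2 - \<sigma> ` S"
        then have h'H: "h' \<in> H" and bh: "b h' \<noteq> 0" and ns: "h' \<notin> \<sigma> ` S" by (auto simp: S2_def)
        have h'G: "h' \<in> carrier G" using hG[OF h'H] .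
        define h where "h = p \<otimes> inv h'"
        have hH: "h \<in> H" using H_mult H_inv pH h'H h_def by simp
        have sh: "\<sigma> h = h'" using pG h'G by (simp add: \<sigma>_def h_def gsimps)
        have "vx h = 0"
        proof (rule ccontr)
          assume "vx h \<noteq> 0"
          then have "h \<in> S" using hH bh sh by (simp add: S_def \<sigma>_def)
          then show False using ns sh by blast
        qed
        then show "G' h' = 0" by (simp add: G'_def h_def act_zero ipH)
      qed
    qed
    moreover have "sum G' (\<sigma> ` S) = sum (G' \<circ> \<sigma>) S"
    proof (rule sum.reindex)
      show "inj_on \<sigma> S"
        unfolding inj_on_def S_def \<sigma>_def using hG pG by (auto simp: inv_equality) (metis inv_inv hG)
    qed
    moreover have "sum (G' \<circ> \<sigma>) S = sum F S"
    proof (rule sum.cong[OF refl])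
      fix h assume "h \<in> S"
      then have hH: "h \<in> H" and hG': "h \<in> carrier G" using hG by (auto simp: S_def)
      have e1: "p \<otimes> inv (inv h \<otimes> p) = h" using hG' pG by (simp add: gsimps)
      have e2: "inv (inv h \<otimes> p) = inv p \<otimes> h" using hG' pG by (simp add: gsimps)
      show "(G' \<circ> \<sigma>) h = F h" using hG' pG by (simp add: G'_def F_def \<sigma>_def e1 e2)
    qed
    ultimately show ?thesis using LHS RHS by simp
  qed
qed

end

context L begin

definition jm :: "'g \<Rightarrow> 'g set \<times> 'g \<Rightarrow> 'g" where
  "jm r = (\<lambda>(y, h). r \<otimes> h \<otimes> inv (rep y))"
definition im :: "'g \<Rightarrow> 'g \<Rightarrow> 'g set \<times> 'g" where
  "im r = (\<lambda>g. ((inv g \<otimes> r) <# H, inv (phi G H rep (inv g \<otimes> r))))"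

lemma jm_G: "r \<in> carrier G \<Longrightarrow> y \<in> lcosets H \<Longrightarrow> h \<in> H \<Longrightarrow> jm r (y, h) \<in> carrier G"
  unfolding jm_def using rep_G hG by simp

lemma im_jm: "r \<in> carrier G \<Longrightarrow> y \<in> lcosets H \<Longrightarrow> h \<in> H \<Longrightarrow> im r (jm r (y, h)) = (y, h)"
  using LEQ[of r "jm r (y, h)" y h] jm_G unfolding im_def by (simp add: jm_def)

lemma jm_im: "r \<in> carrier G \<Longrightarrow> g \<in> carrier G \<Longrightarrow> jm r (im r g) = g"
  using decomp(3)[of r g] unfolding im_def jm_def by simp

lemma im_in: "r \<in> carrier G \<Longrightarrow> g \<in> carrier G \<Longrightarrow> fst (im r g) \<in> lcosets H \<and> snd (im r g) \<in> H"
  using decomp(1,2)[of r g] unfolding im_def by simp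

lemma alpha_nz: "x \<in> lcosets H \<Longrightarrow> alpha G H rep X (x, y) h \<noteq> 0 \<longleftrightarrow>
   y \<in> lcosets H \<and> h \<in> H \<and> X (jm (rep x) (y, h)) (rep x) \<noteq> 0"
  by (auto simp: alpha_cf jm_def)

lemma fin_y:
  assumes fX: "finite {g. X g \<noteq> 0}" and x: "x \<in> lcosets H"
  shows "finite {y. alpha G H rep X (x, y) \<noteq> 0}"
proof (rule finite_subset)
  show "{y. alpha G H rep X (x, y) \<noteq> 0} \<subseteq> (\<lambda>g. fst (im (rep x) g)) ` {g. X g \<noteq> 0}"
  proof
    fix y assume "y \<in> {y. alpha G H rep X (x, y) \<noteq> 0}"
    then obtain h where "alpha G H rep X (x, y) h \<noteq> 0" by (auto simp: fun_eq_iff)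
    then have *: "y \<in> lcosets H" "h \<in> H" "X (jm (rep x) (y, h)) (rep x) \<noteq> 0"
      using alpha_nz[OF x] by auto
    then have "X (jm (rep x) (y, h)) \<noteq> 0" by auto
    moreover have "fst (im (rep x) (jm (rep x) (y, h))) = y" using im_jm[OF rep_G[OF x] *(1,2)] by simp
    ultimately show "y \<in> (\<lambda>g. fst (im (rep x) g)) ` {g. X g \<noteq> 0}" by force
  qed
qed (use fX in simp)

lemma fin_h:
  assumes fX: "finite {g. X g \<noteq> 0}" and x: "x \<in> lcosets H"
  shows "finite {h. alpha G H rep X (x, y) h \<noteq> 0}"
proof (rule finite_subset)
  show "{h. alpha G H rep X (x, y) h \<noteq> 0} \<subseteq> (\<lambda>g. snd (im (rep x) g)) ` {g. X g \<noteq> 0}"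
  proof
    fix h assume "h \<in> {h. alpha G H rep X (x, y) h \<noteq> 0}"
    then have *: "y \<in> lcosets H" "h \<in> H" "X (jm (rep x) (y, h)) (rep x) \<noteq> 0"
      using alpha_nz[OF x] by auto
    then have "X (jm (rep x) (y, h)) \<noteq> 0" by auto
    moreover have "snd (im (rep x) (jm (rep x) (y, h))) = h" using im_jm[OF rep_G[OF x] *(1,2)] by simp
    ultimately show "h \<in> (\<lambda>g. snd (im (rep x) g)) ` {g. X g \<noteq> 0}" by force
  qed
qed (use fX in simp)

lemma LSUM:
  fixes \<Phi> :: "'g set \<Rightarrow> 'g \<Rightarrow> 'a \<Rightarrow> 'c::comm_monoid_add"
  assumes fX: "finite {g. X g \<noteq> 0}" and x: "x \<in> lcosets H"
    and \<Phi>0: "\<And>y h. \<Phi> y h 0 = 0"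
  shows "(\<Sum>y\<in>{y. alpha G H rep X (x, y) \<noteq> 0}. \<Sum>h\<in>{h\<in>H. alpha G H rep X (x, y) h \<noteq> 0}.
            \<Phi> y h (alpha G H rep X (x, y) h))
       = (\<Sum>g\<in>{g\<in>carrier G. X g \<noteq> 0}. \<Phi> ((inv g \<otimes> rep x) <# H) (inv (phi G H rep (inv g \<otimes> rep x))) (X g (rep x)))"
proof -
  define r where "r = rep x"
  have rG: "r \<in> carrier G" using rep_G[OF x] r_def by simp
  define P where "P = {(y, h). y \<in> lcosets H \<and> h \<in> H \<and> X (jm r (y, h)) r \<noteq> 0}"
  define T where "T = {g\<in>carrier G. X g r \<noteq> 0}"
  have "(\<Sum>y\<in>{y. alpha G H rep X (x, y) \<noteq> 0}. \<Sum>h\<in>{h\<in>H. alpha G H rep X (x, y) h \<noteq> 0}.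
            \<Phi> y h (alpha G H rep X (x, y) h))
      = (\<Sum>(y,h)\<in>(SIGMA y:{y. alpha G H rep X (x, y) \<noteq> 0}. {h\<in>H. alpha G H rep X (x, y) h \<noteq> 0}).
            \<Phi> y h (alpha G H rep X (x, y) h))"
    by (rule sum.Sigma) (use fin_y[OF fX x] fin_h[OF fX x] in auto)
  also have "(SIGMA y:{y. alpha G H rep X (x, y) \<noteq> 0}. {h\<in>H. alpha G H rep X (x, y) h \<noteq> 0}) = P"
    unfolding P_def r_def using alpha_nz[OF x] by (auto simp: fun_eq_iff)
  also have "(\<Sum>(y,h)\<in>P. \<Phi> y h (alpha G H rep X (x, y) h)) = (\<Sum>(y,h)\<in>P. \<Phi> y h (X (jm r (y, h)) r))"
    by (rule sum.cong) (auto simp: P_def r_def alpha_cf jm_def x)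
  also have "\<dots> = (\<Sum>g\<in>T. \<Phi> (fst (im r g)) (snd (im r g)) (X g r))"
  proof (rule sum.reindex_bij_witness[where j = "jm r" and i = "im r"])
    fix a assume "a \<in> P"
    then obtain y h where a: "a = (y, h)" "y \<in> lcosets H" "h \<in> H" "X (jm r (y, h)) r \<noteq> 0"
      by (auto simp: P_def)
    show "im r (jm r a) = a" using a im_jm[OF rG] by simp
    show "jm r a \<in> T" using a jm_G[OF rG] by (simp add: T_def)
    show "\<Phi> (fst (im r (jm r a))) (snd (im r (jm r a))) (X (jm r a) r) = (case a of (y, h) \<Rightarrow> \<Phi> y h (X (jm r (y, h)) r))"
      using a im_jm[OF rG] by simp
  next
    fix b assume b: "b \<in> T"
    then have bG: "b \<in> carrier G" by (simp add: T_def)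
    show "jm r (im r b) = b" using jm_im[OF rG bG] .
    show "im r b \<in> P" using im_in[OF rG bG] jm_im[OF rG bG] b
      by (cases "im r b") (auto simp: P_def T_def)
  qed
  also have "\<dots> = (\<Sum>g\<in>{g\<in>carrier G. X g \<noteq> 0}. \<Phi> (fst (im r g)) (snd (im r g)) (X g r))"
    by (rule sum.mono_neutral_left) (use fX in \<open>auto simp: T_def \<Phi>0\<close>)
  finally show ?thesis by (simp only: im_def r_def fst_conv snd_conv)
qed

end


lemma sum_app: "(\<Sum>i\<in>S. f i) a = (\<Sum>i\<in>S. f i a)"
  by (induction S rule: infinite_finite_induct) auto

context L begin

lemma indGD:
  assumes "X \<in> indG_carrier G H act"
  shows "\<And>g. g \<notin> carrier G \<Longrightarrow> X g = 0" "finite {g. X g \<noteq> 0}"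
    "\<And>g t. t \<notin> carrier G \<Longrightarrow> X g t = 0"
    "\<And>g t h. t \<in> carrier G \<Longrightarrow> h \<in> H \<Longrightarrow> X g (t \<otimes> h) = act (inv h) (X g t)"
    "\<And>g. finite {t <# H | t. t \<in> carrier G \<and> X g t \<noteq> 0}"
proof -
  have A: "\<And>g. g \<notin> carrier G \<Longrightarrow> X g = 0" "finite {g. X g \<noteq> 0}"
     "\<And>g. g \<in> carrier G \<Longrightarrow> X g \<in> ind G H act" using assms by (auto simp: cp_carrier_def)
  show "\<And>g. g \<notin> carrier G \<Longrightarrow> X g = 0" "finite {g. X g \<noteq> 0}" using A by auto
  show "\<And>g t. t \<notin> carrier G \<Longrightarrow> X g t = 0"
  proof -
    fix g t assume t: "t \<notin> carrier G"
    show "X g t = 0"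
    proof (cases "g \<in> carrier G")
      case True then show ?thesis using A(3)[OF True] t by (simp add: ind_def)
    next
      case False then show ?thesis using A(1)[OF False] by simp
    qed
  qed
  show "\<And>g t h. t \<in> carrier G \<Longrightarrow> h \<in> H \<Longrightarrow> X g (t \<otimes> h) = act (inv h) (X g t)"
  proof -
    fix g t h assume t: "t \<in> carrier G" and h: "h \<in> H"
    show "X g (t \<otimes> h) = act (inv h) (X g t)"
    proof (cases "g \<in> carrier G")
      case True then show ?thesis using A(3)[OF True] t h by (simp add: ind_def)
    next
      case False then show ?thesis using A(1)[OF False] act_zero H_inv h by simp
    qed
  qed
  show "\<And>g. finite {t <# H | t. t \<in> carrier G \<and> X g t \<noteq> 0}"
  proof -
    fix g show "finite {t <# H | t. t \<in> carrier G \<and> X g t \<noteq> 0}"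
    proof (cases "g \<in> carrier G")
      case True then show ?thesis using A(3) by (simp add: ind_def)
    next
      case False then show ?thesis using A(1) by simp
    qed
  qed
qed

lemma X_rep:
  assumes X: "X \<in> indG_carrier G H act" and t: "t \<in> carrier G"
  shows "X g t = act (inv (phi G H rep t)) (X g (rep (t <# H)))"
  using indGD(4)[OF X rep_G[OF in_lcosets[OF t]] phi_H[OF t]] rep_phi[OF t] by simp

lemma part8:
  assumes X: "X \<in> indG_carrier G H act" and v: "v \<in> vec_carrier G H"
  shows "indG_AG_act G X (ident G H act rep v) =
          ident G H act rep (mat_vec (AH_mult G H act) (alpha G H rep X) v)"
proof
  fix z
  show "indG_AG_act G X (ident G H act rep v) z =
          ident G H act rep (mat_vec (AH_mult G H act) (alpha G H rep X) v) z"
  proof (cases "z \<in> carrier G")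
    case False then show ?thesis by (simp add: ident_def indG_AG_act_def)
  next
    case zG: True
    define x where "x = z <# H"
    define r where "r = rep x"
    define p where "p = phi G H rep z"
    have xl: "x \<in> lcosets H" using in_lcosets[OF zG] x_def by simp
    have rG: "r \<in> carrier G" using rep_G[OF xl] r_def by simp
    have pH: "p \<in> H" using phi_H[OF zG] p_def by simp
    have pG: "p \<in> carrier G" using hG[OF pH] .
    have zrp: "z = r \<otimes> p" using rep_phi[OF zG] r_def x_def p_def by simp
    have "ident G H act rep (mat_vec (AH_mult G H act) (alpha G H rep X) v) z =
       act (inv p) (\<Sum>y\<in>{y. alpha G H rep X (x, y) \<noteq> 0}. \<Sum>h\<in>{h\<in>H. alpha G H rep X (x, y) h \<noteq> 0}.
            (\<lambda>y h a. a * act h (v y (inv h \<otimes> p))) y h (alpha G H rep X (x, y) h))"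
      using zG pH by (simp add: ident_def mat_vec_def sum_app cp_mult_def x_def p_def)
    also have "\<dots> = act (inv p) (\<Sum>g\<in>{g\<in>carrier G. X g \<noteq> 0}.
        X g r * act (inv (phi G H rep (inv g \<otimes> r))) (v ((inv g \<otimes> r) <# H) (inv (inv (phi G H rep (inv g \<otimes> r))) \<otimes> p)))"
      by (subst LSUM[OF indGD(2)[OF X] xl]) (simp_all add: r_def)
    also have "\<dots> = (\<Sum>g\<in>{g\<in>carrier G. X g \<noteq> 0}. X g z * ident G H act rep v (inv g \<otimes> z))"
      unfolding act_sum[OF H_inv[OF pH]]
    proof (rule sum.cong[OF refl])
      fix g assume "g \<in> {g\<in>carrier G. X g \<noteq> 0}"
      then have gG: "g \<in> carrier G" by simp
      define t where "t = inv g \<otimes> r"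
      have tG: "t \<in> carrier G" using gG rG t_def by simp
      have ptH: "phi G H rep t \<in> H" using phi_H[OF tG] .
      have ptG: "phi G H rep t \<in> carrier G" using hG[OF ptH] .
      have e1: "inv g \<otimes> z = t \<otimes> p" using zrp t_def gG rG pG by (simp add: gsimps)
      have e2: "X g z = act (inv p) (X g r)" using indGD(4)[OF X rG pH] zrp by simp
      have e3: "ident G H act rep v (inv g \<otimes> z) =
          act (inv p \<otimes> inv (phi G H rep t)) (v (t <# H) (phi G H rep t \<otimes> p))"
        unfolding e1 ident_def using tG pG coset_mult_H[OF tG pH] phi_mult[OF tG pH] ptG
        by (simp add: gsimps)
      show "act (inv p) (X g r * act (inv (phi G H rep (inv g \<otimes> r)))
             (v ((inv g \<otimes> r) <# H) (inv (inv (phi G H rep (inv g \<otimes> r))) \<otimes> p))) =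
            X g z * ident G H act rep v (inv g \<otimes> z)"
        unfolding e2 e3 t_def[symmetric] using ptG ptH pH H_inv
        by (simp add: act_mult act_comp)
    qed
    also have "\<dots> = indG_AG_act G X (ident G H act rep v) z"
      using zG by (simp add: indG_AG_act_def)
    finally show ?thesis by simp
  qed
qed

end

context L begin

lemma alpha_add: "alpha G H rep (X + Y) = alpha G H rep X + alpha G H rep Y"
proof
  fix p :: "'g set \<times> 'g set"
  show "alpha G H rep (X + Y) p = (alpha G H rep X + alpha G H rep Y) p"
    by (cases p) (auto simp: alpha_cf fun_eq_iff)
qed

lemma alpha_in:
  assumes X: "X \<in> indG_carrier G H act"
  shows "alpha G H rep X \<in> mat_carrier G H (AH_carrier H)"
proof -
  have fX: "finite {g. X g \<noteq> 0}" using indGD(2)[OF X] .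
  have c1: "alpha G H rep X (x, y) \<in> AH_carrier H" for x y
  proof -
    have "finite {k. alpha G H rep X (x, y) k \<noteq> 0}"
    proof (cases "x \<in> lcosets H")
      case True then show ?thesis using fin_h[OF fX True] by simp
    next
      case False then show ?thesis by (simp add: alpha_cf)
    qed
    then show ?thesis by (auto simp: cp_carrier_def alpha_cf)
  qed
  have c2: "x \<notin> lcosets H \<or> y \<notin> lcosets H \<Longrightarrow> alpha G H rep X (x, y) = 0" for x y
    by (auto simp: alpha_cf fun_eq_iff)
  define U where "U = (\<Union>g\<in>{g. X g \<noteq> 0}. {t <# H | t. t \<in> carrier G \<and> X g t \<noteq> 0})"
  have fU: "finite U" unfolding U_def using fX indGD(5)[OF X] by auto
  have sub: "{p. alpha G H rep X p \<noteq> 0} \<subseteq> (SIGMA x:U. {y. alpha G H rep X (x, y) \<noteq> 0})"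
  proof
    fix p assume "p \<in> {p. alpha G H rep X p \<noteq> 0}"
    then obtain x y where p: "p = (x, y)" and nz: "alpha G H rep X (x, y) \<noteq> 0" by (cases p) auto
    then obtain k where "alpha G H rep X (x, y) k \<noteq> 0" by (auto simp: fun_eq_iff)
    then have xl: "x \<in> lcosets H" and yl: "y \<in> lcosets H" and k: "k \<in> H"
      and nz2: "X (jm (rep x) (y, k)) (rep x) \<noteq> 0"
      by (auto simp: alpha_cf jm_def split: if_splits)
    have xr: "x = rep x <# H" using rep_coset[OF xl] by simp
    have nzX: "X (jm (rep x) (y, k)) \<noteq> 0" using nz2 by auto
    have "x \<in> {t <# H | t. t \<in> carrier G \<and> X (jm (rep x) (y, k)) t \<noteq> 0}"
      using xr nz2 rep_G[OF xl] by blast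
    then have "x \<in> U" unfolding U_def using nzX by blast
    then show "p \<in> (SIGMA x:U. {y. alpha G H rep X (x, y) \<noteq> 0})" using p nz by simp
  qed
  have "finite (SIGMA x:U. {y. alpha G H rep X (x, y) \<noteq> 0})"
  proof (rule finite_SigmaI[OF fU])
    fix x assume "x \<in> U"
    then have "x \<in> lcosets H" unfolding U_def using in_lcosets by auto
    then show "finite {y. alpha G H rep X (x, y) \<noteq> 0}" using fin_y[OF fX] by simp
  qed
  then have "finite {p. alpha G H rep X p \<noteq> 0}" using sub finite_subset by blast
  then show ?thesis using c1 c2 by (auto simp: mat_carrier_def)
qed

lemma alpha_mult:
  assumes X: "X \<in> indG_carrier G H act" and Y: "Y \<in> indG_carrier G H act"
  shows "alpha G H rep (indG_mult G X Y) = mat_mult (AH_mult G H act) (alpha G H rep X) (alpha G H rep Y)"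
proof
  fix p :: "'g set \<times> 'g set"
  obtain x z where p: "p = (x, z)" by (cases p)
  show "alpha G H rep (indG_mult G X Y) p = mat_mult (AH_mult G H act) (alpha G H rep X) (alpha G H rep Y) p"
  proof
    fix k
    show "alpha G H rep (indG_mult G X Y) p k = mat_mult (AH_mult G H act) (alpha G H rep X) (alpha G H rep Y) p k"
    proof (cases "x \<in> lcosets H \<and> z \<in> lcosets H \<and> k \<in> H")
      case True
      then have xl: "x \<in> lcosets H" and zl: "z \<in> lcosets H" and k: "k \<in> H" by auto
      define r where "r = rep x"
      define s where "s = rep z"
      have rG: "r \<in> carrier G" using rep_G[OF xl] r_def by simp
      have sG: "s \<in> carrier G" using rep_G[OF zl] s_def by simp
      have kG: "k \<in> carrier G" using hG[OF k] .
      define g0 where "g0 = r \<otimes> k \<otimes> inv s"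
      have g0G: "g0 \<in> carrier G" using rG sG kG g0_def by simp
      have "mat_mult (AH_mult G H act) (alpha G H rep X) (alpha G H rep Y) p k =
        (\<Sum>y\<in>{y. alpha G H rep X (x, y) \<noteq> 0}. \<Sum>h\<in>{h\<in>H. alpha G H rep X (x, y) h \<noteq> 0}.
            (\<lambda>y h a. a * act h (alpha G H rep Y (y, z) (inv h \<otimes> k))) y h (alpha G H rep X (x, y) h))"
        using k by (simp add: p mat_mult_def sum_app cp_mult_def)
      also have "\<dots> = (\<Sum>g\<in>{g\<in>carrier G. X g \<noteq> 0}.
          X g r * act (inv (phi G H rep (inv g \<otimes> r))) (alpha G H rep Y ((inv g \<otimes> r) <# H, z)
             (inv (inv (phi G H rep (inv g \<otimes> r))) \<otimes> k)))"
        by (subst LSUM[OF indGD(2)[OF X] xl]) (simp_all add: r_def)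
      also have "\<dots> = (\<Sum>g\<in>{g\<in>carrier G. X g \<noteq> 0}. X g r * Y (inv g \<otimes> g0) (inv g \<otimes> r))"
      proof (rule sum.cong[OF refl])
        fix g assume "g \<in> {g\<in>carrier G. X g \<noteq> 0}"
        then have gG: "g \<in> carrier G" by simp
        define t where "t = inv g \<otimes> r"
        have tG: "t \<in> carrier G" using gG rG t_def by simp
        have ptH: "phi G H rep t \<in> H" using phi_H[OF tG] .
        have ptG: "phi G H rep t \<in> carrier G" using hG[OF ptH] .
        have yl: "t <# H \<in> lcosets H" using in_lcosets[OF tG] .
        have qt: "rep (t <# H) \<otimes> phi G H rep t = t" using rep_phi[OF tG] .
        have qG: "rep (t <# H) \<in> carrier G" using rep_G[OF yl] .
        have hk: "phi G H rep t \<otimes> k \<in> H" using H_mult ptH k by simp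
        have e1: "rep (t <# H) \<otimes> (phi G H rep t \<otimes> k) \<otimes> inv s = inv g \<otimes> g0"
        proof -
          have "rep (t <# H) \<otimes> (phi G H rep t \<otimes> k) \<otimes> inv s = (rep (t <# H) \<otimes> phi G H rep t) \<otimes> k \<otimes> inv s"
            using qG ptG kG sG by (simp add: m_assoc)
          also have "\<dots> = t \<otimes> k \<otimes> inv s" using qt by simp
          also have "\<dots> = inv g \<otimes> g0" using gG rG kG sG by (simp add: t_def g0_def m_assoc)
          finally show ?thesis .
        qed
        have e2: "Y (inv g \<otimes> g0) t = act (inv (phi G H rep t)) (Y (inv g \<otimes> g0) (rep (t <# H)))"
          using X_rep[OF Y tG] .
        show "X g r * act (inv (phi G H rep (inv g \<otimes> r))) (alpha G H rep Y ((inv g \<otimes> r) <# H, z)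
             (inv (inv (phi G H rep (inv g \<otimes> r))) \<otimes> k)) = X g r * Y (inv g \<otimes> g0) (inv g \<otimes> r)"
          unfolding t_def[symmetric] using ptG hk yl zl e1 e2 by (simp add: alpha_cf s_def)
      qed
      also have "\<dots> = alpha G H rep (indG_mult G X Y) p k"
        using True g0G rG by (simp add: p alpha_cf cp_mult_def sum_app ind_act_def r_def s_def g0_def)
      finally show ?thesis by simp
    next
      case False
      have L: "alpha G H rep (indG_mult G X Y) p k = 0" using False by (auto simp: p alpha_cf)
      have "mat_mult (AH_mult G H act) (alpha G H rep X) (alpha G H rep Y) p k =
         (\<Sum>y\<in>{y. alpha G H rep X (x, y) \<noteq> 0}. AH_mult G H act (alpha G H rep X (x, y)) (alpha G H rep Y (y, z)) k)"
        by (simp add: p mat_mult_def sum_app)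
      also have "\<dots> = 0"
      proof (rule sum.neutral, rule ballI)
        fix y assume y: "y \<in> {y. alpha G H rep X (x, y) \<noteq> 0}"
        then have xl: "x \<in> lcosets H" by (auto simp: alpha_cf fun_eq_iff split: if_splits)
        show "AH_mult G H act (alpha G H rep X (x, y)) (alpha G H rep Y (y, z)) k = 0"
        proof (cases "k \<in> H")
          case False then show ?thesis by (simp add: cp_mult_def)
        next
          case True
          then have zl: "z \<notin> lcosets H" using False xl by simp
          show ?thesis using True zl by (simp add: cp_mult_def alpha_cf act_zero)
        qed
      qed
      finally show ?thesis using L by simp
    qed
  qed
qed

end

context L begin

lemma X_recover:
  assumes X: "X \<in> indG_carrier G H act" and g: "g \<in> carrier G" and t: "t \<in> carrier G"
  shows "X g t = act (inv (phi G H rep t))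
     (alpha G H rep X (t <# H, fst (im (rep (t <# H)) g)) (snd (im (rep (t <# H)) g)))"
proof -
  define r where "r = rep (t <# H)"
  have tl: "t <# H \<in> lcosets H" using in_lcosets[OF t] .
  have rG: "r \<in> carrier G" using rep_G[OF tl] r_def by simp
  obtain y k where yk: "im r g = (y, k)" by (cases "im r g")
  have ii: "y \<in> lcosets H" "k \<in> H" using im_in[OF rG g] yk by auto
  have jj: "jm r (y, k) = g" using jm_im[OF rG g] yk by simp
  have "alpha G H rep X (t <# H, y) k = X (jm r (y, k)) r"
    using ii tl by (simp add: alpha_cf jm_def r_def)
  then have "alpha G H rep X (t <# H, fst (im r g)) (snd (im r g)) = X g r"
    using jj yk by simp
  then show ?thesis using X_rep[OF X t] r_def by simp
qed

lemma alpha_inj: "inj_on (alpha G H rep) (indG_carrier G H act)"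
proof (rule inj_onI)
  fix X Y assume X: "X \<in> indG_carrier G H act" and Y: "Y \<in> indG_carrier G H act"
    and e: "alpha G H rep X = alpha G H rep Y"
  show "X = Y"
  proof (intro ext)
    fix g t
    show "X g t = Y g t"
    proof (cases "g \<in> carrier G \<and> t \<in> carrier G")
      case True then show ?thesis using X_recover[OF X] X_recover[OF Y] e by simp
    next
      case False
      then show ?thesis using indGD(1)[OF X] indGD(1)[OF Y] indGD(3)[OF X] indGD(3)[OF Y]
        by (metis zero_fun_apply)
    qed
  qed
qed

definition beta :: "('g set \<times> 'g set \<Rightarrow> 'g \<Rightarrow> 'a) \<Rightarrow> 'g \<Rightarrow> 'g \<Rightarrow> 'a" where
  "beta M = (\<lambda>g t. if g \<in> carrier G \<and> t \<in> carrier G then act (inv (phi G H rep t))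
     (M (t <# H, fst (im (rep (t <# H)) g)) (snd (im (rep (t <# H)) g))) else 0)"

lemma alpha_surj:
  assumes M: "M \<in> mat_carrier G H (AH_carrier H)"
  shows "\<exists>X\<in>indG_carrier G H act. alpha G H rep X = M"
proof -
  have M1: "\<And>x y. M (x, y) \<in> AH_carrier H" and M2: "\<And>x y. x \<notin> lcosets H \<or> y \<notin> lcosets H \<Longrightarrow> M (x, y) = 0"
    and M3: "finite {p. M p \<noteq> 0}" using M by (auto simp: mat_carrier_def)
  have M4: "\<And>x y k. k \<notin> H \<Longrightarrow> M (x, y) k = 0" using AHD(2)[OF M1] by simp
  have M5: "finite {k. M p k \<noteq> 0}" for p using AHD(1)[OF M1[of "fst p" "snd p"]] by simp
  have ab: "alpha G H rep (beta M) = M"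
  proof
    fix p :: "'g set \<times> 'g set"
    obtain x y where p: "p = (x, y)" by (cases p)
    show "alpha G H rep (beta M) p = M p"
    proof
      fix k
      show "alpha G H rep (beta M) p k = M p k"
      proof (cases "x \<in> lcosets H \<and> y \<in> lcosets H \<and> k \<in> H")
        case True
        then have xl: "x \<in> lcosets H" and yl: "y \<in> lcosets H" and k: "k \<in> H" by auto
        define r where "r = rep x"
        have rG: "r \<in> carrier G" using rep_G[OF xl] r_def by simp
        have rx: "r <# H = x" using rep_coset[OF xl] r_def by simp
        have j: "jm r (y, k) \<in> carrier G" using jm_G[OF rG yl k] .
        have pr: "phi G H rep r = \<one>" using phi_rep1[OF xl] r_def by simp
        have "alpha G H rep (beta M) p k = beta M (jm r (y, k)) r"
          using True by (simp add: p alpha_cf jm_def r_def)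
        also have "\<dots> = M (x, y) k"
          using j rG rx pr im_jm[OF rG yl k] by (simp add: beta_def r_def)
        finally show ?thesis by (simp add: p)
      next
        case False
        have "M (x, y) k = 0"
        proof (cases "x \<in> lcosets H \<and> y \<in> lcosets H")
          case True then show ?thesis using False M4 by simp
        next
          case False then show ?thesis using M2 by simp
        qed
        then show ?thesis using False by (auto simp: p alpha_cf)
      qed
    qed
  qed
  have bin: "beta M \<in> indG_carrier G H act"
    unfolding cp_carrier_def
  proof (intro CollectI conjI ballI allI impI)
    fix g assume gG: "g \<in> carrier G"
    show "beta M g \<in> ind G H act"
      unfolding ind_def
    proof (intro CollectI conjI ballI allI impI)
      fix t assume "t \<notin> carrier G" then show "beta M g t = 0" by (simp add: beta_def)
    next
      fix t h assume t: "t \<in> carrier G" and h: "h \<in> H"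
      have th: "(t \<otimes> h) <# H = t <# H" using coset_mult_H[OF t h] .
      have ph: "phi G H rep (t \<otimes> h) = phi G H rep t \<otimes> h" using phi_mult[OF t h] .
      have ptG: "phi G H rep t \<in> carrier G" using phi_G[OF t] .
      have "inv (phi G H rep t \<otimes> h) = inv h \<otimes> inv (phi G H rep t)" using ptG hG[OF h] by (simp add: inv_mult_group)
      then show "beta M g (t \<otimes> h) = act (inv h) (beta M g t)"
        using t h gG th ph hG[OF h] by (simp add: beta_def act_comp H_inv phi_H)
    next
      show "finite {t <# H | t. t \<in> carrier G \<and> beta M g t \<noteq> 0}"
      proof (rule finite_subset)
        show "{t <# H | t. t \<in> carrier G \<and> beta M g t \<noteq> 0} \<subseteq> fst ` {p. M p \<noteq> 0}"
        proof
          fix x assume "x \<in> {t <# H | t. t \<in> carrier G \<and> beta M g t \<noteq> 0}"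
          then obtain t where t: "x = t <# H" "t \<in> carrier G" "beta M g t \<noteq> 0" by blast
          then have "M (t <# H, fst (im (rep (t <# H)) g)) \<noteq> 0"
            using gG by (auto simp: beta_def act_zero H_inv phi_H)
          then show "x \<in> fst ` {p. M p \<noteq> 0}" using t(1) by force
        qed
        show "finite (fst ` {p. M p \<noteq> 0})" using M3 by simp
      qed
    qed
  next
    fix g assume "g \<notin> carrier G" then show "beta M g = 0" by (simp add: beta_def fun_eq_iff)
  next
    show "finite {g. beta M g \<noteq> 0}"
    proof (rule finite_subset)
      show "{g. beta M g \<noteq> 0} \<subseteq> (\<lambda>(p, k). jm (rep (fst p)) (snd p, k)) ` (SIGMA p:{p. M p \<noteq> 0}. {k. M p k \<noteq> 0})"
      proof
        fix g assume "g \<in> {g. beta M g \<noteq> 0}"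
        then obtain t where "beta M g t \<noteq> 0" by (auto simp: fun_eq_iff)
        then have gG: "g \<in> carrier G" and t: "t \<in> carrier G"
          and nz: "M (t <# H, fst (im (rep (t <# H)) g)) (snd (im (rep (t <# H)) g)) \<noteq> 0"
          by (auto simp: beta_def act_zero H_inv phi_H split: if_splits)
        define r where "r = rep (t <# H)"
        have rG: "r \<in> carrier G" using rep_G[OF in_lcosets[OF t]] r_def by simp
        have jj: "jm r (fst (im r g), snd (im r g)) = g" using jm_im[OF rG gG] by simp
        have mem: "((t <# H, fst (im r g)), snd (im r g)) \<in> (SIGMA p:{p. M p \<noteq> 0}. {k. M p k \<noteq> 0})"
          using nz r_def by auto
        show "g \<in> (\<lambda>(p, k). jm (rep (fst p)) (snd p, k)) ` (SIGMA p:{p. M p \<noteq> 0}. {k. M p k \<noteq> 0})"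
          using jj r_def by (intro image_eqI[OF _ mem]) simp
      qed
      show "finite ((\<lambda>(p, k). jm (rep (fst p)) (snd p, k)) ` (SIGMA p:{p. M p \<noteq> 0}. {k. M p k \<noteq> 0}))"
        using M3 M5 by (intro finite_imageI finite_SigmaI) auto
    qed
  qed
  show ?thesis using ab bin by blast
qed

lemma part1: "ring_iso_betw (alpha G H rep)
        (indG_carrier G H act) (indG_mult G)
        (mat_carrier G H (AH_carrier H)) (mat_mult (AH_mult G H act))"
proof -
  have "alpha G H rep ` indG_carrier G H act = mat_carrier G H (AH_carrier H)"
  proof
    show "alpha G H rep ` indG_carrier G H act \<subseteq> mat_carrier G H (AH_carrier H)"
      using alpha_in by (rule image_subsetI)
    show "mat_carrier G H (AH_carrier H) \<subseteq> alpha G H rep ` indG_carrier G H act"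
    proof
      fix M :: "'g set \<times> 'g set \<Rightarrow> 'g \<Rightarrow> 'a" assume "M \<in> mat_carrier G H (AH_carrier H)"
      then obtain X where "X \<in> indG_carrier G H act" "alpha G H rep X = M" using alpha_surj by metis
      then show "M \<in> alpha G H rep ` indG_carrier G H act" by blast
    qed
  qed
  then show ?thesis unfolding ring_iso_betw_def bij_betw_def
  proof (intro conjI ballI)
    fix X Y assume "X \<in> indG_carrier G H act" "Y \<in> indG_carrier G H act"
    then show "alpha G H rep (indG_mult G X Y) = mat_mult (AH_mult G H act) (alpha G H rep X) (alpha G H rep Y)"
      by (rule alpha_mult)
    show "alpha G H rep (X + Y) = alpha G H rep X + alpha G H rep Y" by (rule alpha_add)
  qed (use alpha_inj in simp_all)
qed

end

theorem theorem10p12: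
  fixes G :: "('g, 'm) monoid_scheme" and H :: "'g set"
    and act :: "'g \<Rightarrow> 'a::ring \<Rightarrow> 'a" and rep :: "'g set \<Rightarrow> 'g"
  assumes "group G" and "subgroup H G" and "H_ring G H act"
    and "rep_system G H rep"
  shows
    "ring_iso_betw (alpha G H rep)
        (indG_carrier G H act) (indG_mult G)
        (mat_carrier G H (AH_carrier H)) (mat_mult (AH_mult G H act))
   \<and> (\<forall>s\<in>carrier G. \<forall>a. \<forall>g\<in>carrier G.
        alpha G H rep (cp_single (xi G H act s a) g) =
          mat_unit (s <#\<^bsub>G\<^esub> H) ((inv\<^bsub>G\<^esub> g \<otimes>\<^bsub>G\<^esub> s) <#\<^bsub>G\<^esub> H)
            (cp_single (act (phi G H rep s) a)
               (phi G H rep s \<otimes>\<^bsub>G\<^esub> inv\<^bsub>G\<^esub> (phi G H rep (inv\<^bsub>G\<^esub> g \<otimes>\<^bsub>G\<^esub> s)))))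
   \<and> (\<forall>x\<in>AH_carrier H.
        alpha G H rep (\<lambda>g. xi G H act \<one>\<^bsub>G\<^esub> (x g)) = mat_unit H H x)
   \<and> (\<forall>(act' :: 'g \<Rightarrow> 'b::ring \<Rightarrow> 'b) f. H_ring G H act' \<longrightarrow> H_ring_hom H act act' f \<longrightarrow>
        (\<forall>X\<in>indG_carrier G H act.
           alpha G H rep (\<lambda>g. f \<circ> X g) = (\<lambda>p. f \<circ> alpha G H rep X p)))
   \<and> bij_betw (ident G H act rep) (vec_carrier G H) (AG_carrier G)
   \<and> (\<forall>v\<in>vec_carrier G H. \<forall>w\<in>vec_carrier G H.
        ident G H act rep (v + w) = ident G H act rep v + ident G H act rep w)
   \<and> (\<forall>v\<in>vec_carrier G H. \<forall>b\<in>AH_carrier H.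
        ident G H act rep (vec_right_act (AH_mult G H act) v b) =
          AG_right_act G H act (ident G H act rep v) b)
   \<and> (\<forall>X\<in>indG_carrier G H act. \<forall>v\<in>vec_carrier G H.
        indG_AG_act G X (ident G H act rep v) =
          ident G H act rep (mat_vec (AH_mult G H act) (alpha G H rep X) v))"
proof -
  interpret L G H act rep
    by (simp add: L_def L_axioms_def assms)
  show ?thesis
  proof (intro conjI)
    show "ring_iso_betw (alpha G H rep)
        (indG_carrier G H act) (indG_mult G)
        (mat_carrier G H (AH_carrier H)) (mat_mult (AH_mult G H act))" by (rule part1)
  next
    show "bij_betw (ident G H act rep) (vec_carrier G H) (AG_carrier G)" by (rule part5)
  qed (simp_all add: part2 part3 naturality part6 part7 part8)
qed


end
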